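(* Let $r>0$ and $d_0>0$. There exists $s_0$ such that for all $s\ge s_0$, for every $\Gamma\in\mathcal{H}$ and all non-empty compact sets $K,K'\subseteq\mathbb{R}^2$ with $d_H(K,K')<d_0$: if $K\in\mathcal{LA}_s(\Gamma)$, then $K'\in\mathcal{LA}_r(\Gamma)$.
   Context: $d_H$ is the Hausdorff distance. $\mathcal{H}$ is the set of homothety types: non-empty compact subsets of $\mathbb{R}^2$ modulo the group generated by translations and homotheties of positive ratio. For $r>0$, $\Gamma\in\mathcal{H}$ and non-empty compact $K\subseteq\mathbb{R}^2$, $K$ is an $r$-large approximate of $\Gamma$, written $K\in\mathcal{LA}_r(\Gamma)$, if $\mathrm{diam}(K)>r$ and there is a set $\hat\Gamma\in\Gamma$ of diameter $1$ with $d_H(K/\mathrm{diam}(K),\hat\Gamma)<1/r$. *)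

theory Defs
  imports "HOL-Analysis.Analysis"
begin

definition hausdorff_dist :: "'a::metric_space set \<Rightarrow> 'a set \<Rightarrow> real" where
  "hausdorff_dist A B = max (SUP a\<in>A. infdist a B) (SUP b\<in>B. infdist b A)"

definition nc_set :: "(real^2) set \<Rightarrow> bool" where
  "nc_set K \<longleftrightarrow> K \<noteq> {} \<and> compact K"

text \<open>The group generated by translations and positive homotheties of the plane
  consists exactly of the maps x \<mapsto> t + c x with c > 0.  A homothety type is an
  equivalence class of non-empty compact sets under this group action.\<close>
definition homothety_class :: "(real^2) set \<Rightarrow> (real^2) set set" where
  "homothety_class A = {B. \<exists>c t. c > 0 \<and> B = (\<lambda>x. t + c *\<^sub>R x) ` A}"

definition homothety_type :: "(real^2) set set \<Rightarrow> bool" where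
  "homothety_type \<Gamma> \<longleftrightarrow> (\<exists>A. nc_set A \<and> \<Gamma> = homothety_class A)"

definition large_approx :: "real \<Rightarrow> (real^2) set set \<Rightarrow> (real^2) set \<Rightarrow> bool" where
  "large_approx r \<Gamma> K \<longleftrightarrow>
     diameter K > r \<and>
     (\<exists>G\<in>\<Gamma>. diameter G = 1 \<and>
        hausdorff_dist ((\<lambda>x. (1 / diameter K) *\<^sub>R x) ` K) G < 1 / r)"

end

theory Submission
  imports Defs
begin


lemma diameter_translate:
  fixes S :: "'a::real_normed_vector set"
  shows "diameter ((\<lambda>x. v + x) ` S) = diameter S"
proof -
  have e: "(\<lambda>x. v + x) ` S \<times> (\<lambda>x. v + x) ` S = map_prod (\<lambda>x. v + x) (\<lambda>x. v + x) ` (S \<times> S)"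
    by (simp add: map_prod_surj_on)
  show ?thesis unfolding diameter_def e
    by (simp add: image_comp o_def case_prod_beta dist_add_cancel)
qed

lemma hd_lt:
  fixes A B :: "'a::metric_space set"
  assumes "compact A" "compact B" "A \<noteq> {}" "B \<noteq> {}" "hausdorff_dist A B < e"
  shows "(\<forall>a\<in>A. \<exists>b\<in>B. dist a b < e) \<and> (\<forall>b\<in>B. \<exists>a\<in>A. dist b a < e)"
proof -
  have ba: "bdd_above ((\<lambda>a. infdist a B) ` A)"
    by (intro bounded_imp_bdd_above compact_imp_bounded compact_continuous_image
        continuous_on_infdist continuous_on_id assms)
  have bb: "bdd_above ((\<lambda>b. infdist b A) ` B)"
    by (intro bounded_imp_bdd_above compact_imp_bounded compact_continuous_image
        continuous_on_infdist continuous_on_id assms)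
  have pt: "\<exists>y\<in>Y. dist x y < e" if "infdist x Y < e" "Y \<noteq> {}" for x and Y :: "'a set"
  proof -
    have "(INF y\<in>Y. dist x y) < e" using that infdist_notempty by metis
    moreover have "bdd_below (dist x ` Y)" by (rule bdd_belowI[where m=0]) auto
    ultimately show ?thesis using cINF_less_iff[where f="dist x" and A=Y and a=e] using that(2) by simp
  qed
  have "infdist a B < e" if "a \<in> A" for a
    using cSUP_upper[OF that ba] assms(5) unfolding hausdorff_dist_def by linarith
  moreover have "infdist b A < e" if "b \<in> B" for b
    using cSUP_upper[OF that bb] assms(5) unfolding hausdorff_dist_def by linarith
  ultimately show ?thesis using pt assms by blast
qed

lemma hd_le:
  fixes A B :: "'a::metric_space set"
  assumes "A \<noteq> {}" "B \<noteq> {}"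
    and "\<forall>a\<in>A. \<exists>b\<in>B. dist a b \<le> e" "\<forall>b\<in>B. \<exists>a\<in>A. dist b a \<le> e"
  shows "hausdorff_dist A B \<le> e"
  unfolding hausdorff_dist_def using assms
  by (auto intro!: cSUP_least intro: infdist_le2)



lemma pt_bound:
  fixes x y g p :: "'a::real_normed_vector"
  assumes D: "D > 0" and D': "D' > 0" and s: "s > 0"
    and xy: "dist x y \<le> d0" and xg: "dist ((1/D) *\<^sub>R x) g \<le> 1/s" and gp: "dist g p \<le> 1"
  shows "dist ((1/D') *\<^sub>R y) ((D/D' - 1) *\<^sub>R p + g) \<le> d0/D' + D/(D' * s) + abs (D - D')/D'"
proof -
  define l where "l = D/D'"
  have l0: "l > 0" using D D' by (simp add: l_def)
  have eq: "(1/D') *\<^sub>R y - ((l - 1) *\<^sub>R p + g)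
      = (l/D) *\<^sub>R (y - x) + l *\<^sub>R ((1/D) *\<^sub>R x - g) + (l - 1) *\<^sub>R (g - p)"
    using D D' by (simp add: l_def algebra_simps)
  have "norm ((l/D) *\<^sub>R (y - x)) \<le> l/D * d0"
    using xy l0 D by (simp add: dist_norm norm_minus_commute mult_left_mono divide_right_mono)
  moreover have "norm (l *\<^sub>R ((1/D) *\<^sub>R x - g)) \<le> l * (1/s)"
    using mult_left_mono[OF xg[unfolded dist_norm], of l] l0 by simp
  moreover have "norm ((l - 1) *\<^sub>R (g - p)) \<le> abs (l - 1)"
    using mult_left_mono[OF gp[unfolded dist_norm], of "abs (l - 1)"] by simp
  ultimately have "norm ((1/D') *\<^sub>R y - ((l - 1) *\<^sub>R p + g)) \<le> l/D * d0 + l * (1/s) + abs (l - 1)"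
    unfolding eq using norm_triangle_ineq[of "(l/D) *\<^sub>R (y - x) + l *\<^sub>R ((1/D) *\<^sub>R x - g)" "(l - 1) *\<^sub>R (g - p)"]
      norm_triangle_ineq[of "(l/D) *\<^sub>R (y - x)" "l *\<^sub>R ((1/D) *\<^sub>R x - g)"] by linarith
  moreover have "l/D * d0 = d0/D'" using D by (simp add: l_def field_simps)
  moreover have "l * (1/s) = D/(D' * s)" by (simp add: l_def)
  moreover have "abs (l - 1) = abs (D - D')/D'"
  proof -
    have "l - 1 = (D - D')/D'" using D' by (simp add: l_def diff_divide_distrib)
    then show ?thesis using D' by simp
  qed
  ultimately have "dist ((1/D') *\<^sub>R y) ((l - 1) *\<^sub>R p + g) \<le> d0/D' + D/(D' * s) + abs (D - D')/D'"
    unfolding dist_norm by linarith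
  then show ?thesis unfolding l_def .
qed


lemma diam_close:
  fixes K K' :: "'a::metric_space set"
  assumes "compact K" "K \<noteq> {}" "compact K'"
    and P: "\<forall>a\<in>K. \<exists>b\<in>K'. dist a b < d0"
  shows "diameter K \<le> diameter K' + 2 * d0"
proof -
  obtain x y where xy: "x \<in> K" "y \<in> K" "dist x y = diameter K"
    using diameter_compact_attained[OF assms(1,2)] by blast
  obtain x' where x': "x' \<in> K'" "dist x x' < d0" using P xy by blast
  obtain y' where y': "y' \<in> K'" "dist y y' < d0" using P xy by blast
  have "dist x' y' \<le> diameter K'"
    using diameter_bounded_bound[OF compact_imp_bounded[OF assms(3)] x'(1) y'(1)] .
  moreover have "dist x y \<le> dist x x' + dist x' y' + dist y y'"
    by (metis add_mono dist_commute dist_triangle dist_triangle_le order_refl)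
  ultimately show ?thesis using xy x' y' by linarith
qed

theorem mainTheorem5:
  fixes r d0 :: real
  assumes "r > 0" and "d0 > 0"
  shows "\<exists>s0::real. \<forall>s\<ge>s0. \<forall>\<Gamma> K K'.
           homothety_type \<Gamma> \<longrightarrow> nc_set K \<longrightarrow> nc_set K' \<longrightarrow>
           hausdorff_dist K K' < d0 \<longrightarrow>
           large_approx s \<Gamma> K \<longrightarrow> large_approx r \<Gamma> K'"
proof (intro exI[of _ "2*d0 + 9*d0*r + 4*r + 1"] allI impI)
  fix s \<Gamma> and K K' :: "(real^2) set"
  assume s: "s \<ge> 2*d0 + 9*d0*r + 4*r + 1" and ht: "homothety_type \<Gamma>"
    and nK: "nc_set K" and nK': "nc_set K'" and hKK: "hausdorff_dist K K' < d0"
    and la: "large_approx s \<Gamma> K"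
  have r0: "r > 0" and d00: "d0 > 0" using assms by auto
  have s0: "s > 0" using s r0 d00
    by (smt (verit) mult_nonneg_nonneg)
  obtain A where A: "nc_set A" "\<Gamma> = homothety_class A" using ht unfolding homothety_type_def by blast
  define D where "D = diameter K"
  define D' where "D' = diameter K'"
  obtain G where DG: "D > s" "G \<in> \<Gamma>" "diameter G = 1"
      "hausdorff_dist ((\<lambda>x. (1 / D) *\<^sub>R x) ` K) G < 1 / s"
    using la unfolding large_approx_def D_def by blast
  obtain c t where ct: "c > 0" "G = (\<lambda>x. t + c *\<^sub>R x) ` A"
    using DG(2) A(2) unfolding homothety_class_def by blast
  have cG: "compact G" "G \<noteq> {}" using A(1) ct unfolding nc_set_def
    by (auto intro!: compact_continuous_image continuous_intros)
  have cK: "compact K" "K \<noteq> {}" "compact K'" "K' \<noteq> {}" using nK nK' unfolding nc_set_def by auto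
  define KD where "KD = (\<lambda>x. (1 / D) *\<^sub>R x) ` K"
  have cKD: "compact KD" "KD \<noteq> {}" unfolding KD_def using cK
    by (auto intro!: compact_continuous_image continuous_intros)
  note P = hd_lt[OF cK(1,3,2,4) hKK]
  note Q = hd_lt[OF cKD(1) cG(1) cKD(2) cG(2) DG(4)[folded KD_def]]
  have Dle1: "D \<le> D' + 2 * d0" unfolding D_def D'_def using diam_close[OF cK(1,2,3)] P by blast
  have Dle2: "D' \<le> D + 2 * d0" unfolding D_def D'_def using diam_close[OF cK(3,4,1)] P
    by (meson dist_commute)
  have D0: "D > 0" using DG(1) s0 by linarith
  have D'big: "D' > 9*d0*r + 4*r + 1" using Dle1 DG(1) s by linarith
  have D'0: "D' > 0" using D'big r0 d00 by (smt (verit) mult_nonneg_nonneg)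
  define B where "B = d0/D' + D/(D' * s) + abs (D - D')/D'"
  have B: "B < 1 / r"
  proof -
    have s1: "s \<ge> 1" "s > 4 * r" using s r0 d00 by (smt (verit) mult_nonneg_nonneg)+
    have "D/(D' * s) \<le> (D' + 2*d0)/(D' * s)"
      using Dle1 D'0 s0 by (intro divide_right_mono) auto
    also have "\<dots> = 1/s + (2*d0/D')/s" using D'0 s0 by (simp add: field_simps)
    also have "\<dots> \<le> 1/s + 2*d0/D'" using s1 d00 D'0
      by (simp add: divide_le_eq_1 divide_le_cancel mult_imp_div_pos_le)
    finally have t2: "D/(D' * s) \<le> 1/s + 2*d0/D'" .
    have t3: "abs (D - D')/D' \<le> 2*d0/D'" using Dle1 Dle2 D'0 by (intro divide_right_mono) auto
    have t4: "1/s < 1/(4*r)" using s1 r0 by (simp add: frac_less2)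
    have t5: "5*d0/D' < 5/(9*r)" using D'big r0 d00 D'0
      by (simp add: field_simps)
    have "B < 5*d0/D' + 1/(4*r)" using t2 t3 t4 unfolding B_def by (simp add: add_divide_distrib[symmetric] )
    also have "\<dots> < 5/(9*r) + 1/(4*r)" using t5 by simp
    also have "\<dots> < 1/r" using r0 by (simp add: field_simps)
    finally show ?thesis .
  qed
  obtain p where p: "p \<in> G" using cG by blast
  define v where "v = (D/D' - 1) *\<^sub>R p"
  define G' where "G' = (\<lambda>x. v + x) ` G"
  have G'in: "G' \<in> \<Gamma>" unfolding G'_def A(2) homothety_class_def ct(2)
    using ct(1) by (intro CollectI exI[of _ c] exI[of _ "v + t"]) (auto simp: image_comp o_def add.assoc)
  have G'd: "diameter G' = 1" unfolding G'_def diameter_translate DG(3) ..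
  have bG: "bounded G" using cG compact_imp_bounded by blast
  have gp: "dist g p \<le> 1" if "g \<in> G" for g
    using diameter_bounded_bound[OF bG that p] DG(3) by simp
  have "hausdorff_dist ((\<lambda>x. (1 / D') *\<^sub>R x) ` K') G' \<le> B"
  proof (rule hd_le)
    show "(\<lambda>x. (1 / D') *\<^sub>R x) ` K' \<noteq> {}" "G' \<noteq> {}" using cK cG unfolding G'_def by auto
    show "\<forall>a\<in>(\<lambda>x. (1 / D') *\<^sub>R x) ` K'. \<exists>b\<in>G'. dist a b \<le> B"
    proof
      fix a assume "a \<in> (\<lambda>x. (1 / D') *\<^sub>R x) ` K'"
      then obtain y where y: "y \<in> K'" "a = (1 / D') *\<^sub>R y" by blast
      obtain x where x: "x \<in> K" "dist y x < d0" using P y(1) by blast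
      obtain g where g: "g \<in> G" "dist ((1 / D) *\<^sub>R x) g < 1 / s" using Q x(1) unfolding KD_def by blast
      have "dist a (v + g) \<le> B" unfolding y(2) v_def B_def
        by (rule pt_bound[OF D0 D'0 s0, of x y]) (use x g gp[OF g(1)] in \<open>auto simp: dist_commute\<close>)
      then show "\<exists>b\<in>G'. dist a b \<le> B" using g(1) unfolding G'_def by blast
    qed
    show "\<forall>b\<in>G'. \<exists>a\<in>(\<lambda>x. (1 / D') *\<^sub>R x) ` K'. dist b a \<le> B"
    proof
      fix b assume "b \<in> G'"
      then obtain g where g: "g \<in> G" "b = v + g" unfolding G'_def by blast
      obtain x where x: "x \<in> K" "dist g ((1 / D) *\<^sub>R x) < 1 / s" using Q g(1) unfolding KD_def by blast
      obtain y where y: "y \<in> K'" "dist x y < d0" using P x(1) by blast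
      have "dist ((1 / D') *\<^sub>R y) (v + g) \<le> B" unfolding v_def B_def
        by (rule pt_bound[OF D0 D'0 s0, of x y]) (use x y gp[OF g(1)] in \<open>auto simp: dist_commute\<close>)
      then show "\<exists>a\<in>(\<lambda>x. (1 / D') *\<^sub>R x) ` K'. dist b a \<le> B" using y(1) g(2)
        by (auto simp: dist_commute)
    qed
  qed
  then show "large_approx r \<Gamma> K'" unfolding large_approx_def D'_def[symmetric]
    using G'in G'd B D'big r0 d00 by (smt (verit) mult_nonneg_nonneg)
qed

end
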